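(* Let $t\geq3$, let $A_1,\dots,A_k\in\Pi_n^{(t)}$, let $\epsilon_1,\dots,\epsilon_k$ be independent uniformly distributed $\{-1,1\}$-valued random variables, and let $R=\lceil\log_2 n\rceil$. Then for $p\geq1$, $$\mathbb{E}\Big[\Big\|\sum_{i=1}^k\epsilon_iA_i\Big\|_{\ell_p,\dots,\ell_p}\Big]\leq2^t\sum_{\mathbf r\in[R]^t}\frac{\mathbb{E}\Big[\max\Big\{\Big(\sum_{i=1}^k\epsilon_iA_i\Big)(\mathbf x): \mathbf x\in H^n_{2^{r_1}}\times\cdots\times H^n_{2^{r_t}}\Big\}\Big]}{2^{(r_1+\cdots+r_t)/p}}.$$
   Context: For $d\in\mathbb{N}$, $H^n_d=\{x\in\{-1,0,1\}^n: \|x\|_{\ell_0}=\min\{d,n\}\}$, where $\|x\|_{\ell_0}$ is the number of nonzero entries; for $\mathbf x=(x[1],\dots,x[t])$ we write $A(\mathbf x)=A(x[1],\dots,x[t])$. $\Pi_n^{(t)}$ is the set of $t$-linear forms $A$ on $\mathbb{R}^n$ such that $|A(e_{s_1},\dots,e_{s_t})|$ summed over all indices except one fixed coordinate (i.e. $|A|(\mathbf 1,\dots,e_s,\dots,\mathbf 1)$, with $|A|$ the form with entries $|A(e_{s_1},\dots,e_{s_t})|$) is at most $1$ for every $s\in[n]$ and every position. $\|A\|_{\ell_p,\dots,\ell_p}=\sup\{A(x[1],\dots,x[t])/(\|x[1]\|_{\ell_p}\cdots\|x[t]\|_{\ell_p}): x[i]\neq0\}$. $[R]=\{1,\dots,R\}$.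 *)

theory Defs
  imports "HOL-Probability.Probability"
begin

text \<open>A t-linear form on R^n is given by its coefficients A(e_{s_1},...,e_{s_t}),
  i.e. a function on index tuples s : {0..<t} -> {0..<n}.
  Vectors of R^n are functions nat => real (coordinates 0..<n);
  a tuple (x[1],...,x[t]) is a function nat => nat => real (positions 0..<t).\<close>

definition idx :: "nat \<Rightarrow> nat \<Rightarrow> (nat \<Rightarrow> nat) set" where
  "idx t n = PiE {..<t} (\<lambda>_. {..<n})"

definition mlf_eval :: "nat \<Rightarrow> nat \<Rightarrow> ((nat \<Rightarrow> nat) \<Rightarrow> real) \<Rightarrow> (nat \<Rightarrow> nat \<Rightarrow> real) \<Rightarrow> real" where
  "mlf_eval t n A xs = (\<Sum>s\<in>idx t n. A s * (\<Prod>j<t. xs j (s j)))"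

definition Pi_class :: "nat \<Rightarrow> nat \<Rightarrow> ((nat \<Rightarrow> nat) \<Rightarrow> real) \<Rightarrow> bool" where
  "Pi_class t n A \<longleftrightarrow>
     (\<forall>j<t. \<forall>s0<n. (\<Sum>s\<in>{s\<in>idx t n. s j = s0}. \<bar>A s\<bar>) \<le> 1)"

definition lp_norm :: "nat \<Rightarrow> real \<Rightarrow> (nat \<Rightarrow> real) \<Rightarrow> real" where
  "lp_norm n p v = (\<Sum>i<n. \<bar>v i\<bar> powr p) powr (1 / p)"

definition mlf_norm :: "nat \<Rightarrow> nat \<Rightarrow> real \<Rightarrow> ((nat \<Rightarrow> nat) \<Rightarrow> real) \<Rightarrow> real" where
  "mlf_norm t n p A = Sup {mlf_eval t n A xs / (\<Prod>j<t. lp_norm n p (xs j)) | xs.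
       xs \<in> PiE {..<t} (\<lambda>_. {v \<in> extensional {..<n}. (\<exists>i<n. v i \<noteq> 0)})}"

definition Hset :: "nat \<Rightarrow> nat \<Rightarrow> (nat \<Rightarrow> real) set" where
  "Hset n d = {x \<in> PiE {..<n} (\<lambda>_. {-1, 0, 1}). card {i\<in>{..<n}. x i \<noteq> 0} = min d n}"

definition rademacher :: "nat \<Rightarrow> (nat \<Rightarrow> real) pmf" where
  "rademacher k = Pi_pmf {..<k} 0 (\<lambda>_. pmf_of_set {-1, 1})"

definition rsum :: "nat \<Rightarrow> (nat \<Rightarrow> (nat \<Rightarrow> nat) \<Rightarrow> real) \<Rightarrow> (nat \<Rightarrow> real) \<Rightarrow> (nat \<Rightarrow> nat) \<Rightarrow> real" where
  "rsum k A \<epsilon> = (\<lambda>s. \<Sum>i<k. \<epsilon> i * A i s)"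

end

theory Submission
  imports Defs
begin


lemma mlf_eval_cong:
  assumes "\<forall>j<t. \<forall>i<n. xs j i = ys j i"
  shows "mlf_eval t n B xs = mlf_eval t n B ys"
  unfolding mlf_eval_def
proof (rule sum.cong[OF refl])
  fix s assume "s \<in> idx t n"
  hence "\<forall>j<t. s j < n" by (auto simp: idx_def PiE_def Pi_def)
  thus "B s * (\<Prod>j<t. xs j (s j)) = B s * (\<Prod>j<t. ys j (s j))"
    using assms by (intro arg_cong[where f="\<lambda>x. B s * x"] prod.cong) auto
qed

lemma mlf_expand:
  assumes fin: "\<forall>j<t. finite (I j)"
    and ex: "\<forall>j<t. \<forall>i<n. xs j i = (\<Sum>a\<in>I j. w j a * \<phi> j a i)"
  shows "mlf_eval t n B xs =
    (\<Sum>as\<in>PiE {..<t} I. (\<Prod>j<t. w j (as j)) * mlf_eval t n B (\<lambda>j. \<phi> j (as j)))"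
proof -
  have "mlf_eval t n B xs = (\<Sum>s\<in>idx t n. B s * (\<Sum>as\<in>PiE {..<t} I. \<Prod>j<t. w j (as j) * \<phi> j (as j) (s j)))"
    unfolding mlf_eval_def
  proof (rule sum.cong[OF refl])
    fix s assume "s \<in> idx t n"
    hence sn: "\<forall>j<t. s j < n" by (auto simp: idx_def PiE_def Pi_def)
    have "(\<Prod>j<t. xs j (s j)) = (\<Prod>j<t. \<Sum>a\<in>I j. w j a * \<phi> j a (s j))"
      using ex sn by (intro prod.cong) auto
    also have "\<dots> = (\<Sum>as\<in>PiE {..<t} I. \<Prod>j<t. w j (as j) * \<phi> j (as j) (s j))"
      by (rule prod_sum_PiE) (use fin in auto)
    finally show "B s * (\<Prod>j<t. xs j (s j)) = B s * (\<Sum>as\<in>PiE {..<t} I. \<Prod>j<t. w j (as j) * \<phi> j (as j) (s j))"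
      by simp
  qed
  also have "\<dots> = (\<Sum>s\<in>idx t n. \<Sum>as\<in>PiE {..<t} I. (\<Prod>j<t. w j (as j)) * (B s * (\<Prod>j<t. \<phi> j (as j) (s j))))"
    by (simp add: sum_distrib_left prod.distrib mult_ac)
  also have "\<dots> = (\<Sum>as\<in>PiE {..<t} I. \<Sum>s\<in>idx t n. (\<Prod>j<t. w j (as j)) * (B s * (\<Prod>j<t. \<phi> j (as j) (s j))))"
    by (rule sum.swap)
  also have "\<dots> = (\<Sum>as\<in>PiE {..<t} I. (\<Prod>j<t. w j (as j)) * mlf_eval t n B (\<lambda>j. \<phi> j (as j)))"
    by (simp add: mlf_eval_def sum_distrib_left)
  finally show ?thesis .
qed

lemma mlf_convex_bound:
  assumes fin: "\<forall>j<t. finite (I j)"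
    and ex: "\<forall>j<t. \<forall>i<n. xs j i = (\<Sum>a\<in>I j. w j a * \<phi> j a i)"
    and wnn: "\<forall>j<t. \<forall>a\<in>I j. w j a \<ge> 0"
    and inH: "\<forall>j<t. \<forall>a\<in>I j. \<phi> j a \<in> H j"
    and finH: "\<forall>j<t. finite (H j)"
  shows "mlf_eval t n B xs \<le> (\<Prod>j<t. \<Sum>a\<in>I j. w j a) * Max (mlf_eval t n B ` PiE {..<t} H)"
proof -
  let ?M = "Max (mlf_eval t n B ` PiE {..<t} H)"
  have "mlf_eval t n B xs =
    (\<Sum>as\<in>PiE {..<t} I. (\<Prod>j<t. w j (as j)) * mlf_eval t n B (\<lambda>j. \<phi> j (as j)))"
    by (rule mlf_expand[OF fin ex])
  also have "\<dots> \<le> (\<Sum>as\<in>PiE {..<t} I. (\<Prod>j<t. w j (as j)) * ?M)"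
  proof (rule sum_mono)
    fix as assume as: "as \<in> PiE {..<t} I"
    have eq: "mlf_eval t n B (\<lambda>j. \<phi> j (as j)) = mlf_eval t n B (restrict (\<lambda>j. \<phi> j (as j)) {..<t})"
      by (rule mlf_eval_cong) auto
    have "restrict (\<lambda>j. \<phi> j (as j)) {..<t} \<in> PiE {..<t} H"
      using as inH by (auto simp: PiE_def Pi_def)
    hence "mlf_eval t n B (\<lambda>j. \<phi> j (as j)) \<le> ?M"
      unfolding eq using finH by (intro Max_ge finite_imageI finite_PiE) auto
    moreover have "(\<Prod>j<t. w j (as j)) \<ge> 0"
      using as wnn by (intro prod_nonneg) (auto simp: PiE_def Pi_def)
    ultimately show "(\<Prod>j<t. w j (as j)) * mlf_eval t n B (\<lambda>j. \<phi> j (as j)) \<le> (\<Prod>j<t. w j (as j)) * ?M"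
      by (rule mult_left_mono)
  qed
  also have "\<dots> = (\<Sum>as\<in>PiE {..<t} I. (\<Prod>j<t. w j (as j))) * ?M"
    by (simp add: sum_distrib_right)
  also have "(\<Sum>as\<in>PiE {..<t} I. (\<Prod>j<t. w j (as j))) = (\<Prod>j<t. \<Sum>a\<in>I j. w j a)"
    by (rule prod_sum_PiE[symmetric]) (use fin in auto)
  finally show ?thesis .
qed



lemma finite_Hset: "finite (Hset n d)"
proof -
  have "Hset n d \<subseteq> PiE {..<n} (\<lambda>_. {-1, 0, 1})" by (auto simp: Hset_def)
  moreover have "finite (PiE {..<n} (\<lambda>_. {-1, 0, 1::real}))" by (intro finite_PiE) auto
  ultimately show ?thesis by (rule finite_subset)
qed

lemma Hset_nonempty: "Hset n d \<noteq> {}"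
proof -
  let ?h = "\<lambda>i. if i < n then (if i < min d n then 1 else 0) else (undefined::real)"
  have "{i\<in>{..<n}. ?h i \<noteq> 0} = {..<min d n}" by auto
  hence "?h \<in> Hset n d" by (auto simp: Hset_def PiE_def Pi_def extensional_def)
  thus ?thesis by blast
qed

lemma Hset_neg: "h \<in> Hset n d \<Longrightarrow> (\<lambda>i. if i < n then - h i else undefined) \<in> Hset n d"
proof -
  assume h: "h \<in> Hset n d"
  have "{i\<in>{..<n}. (if i < n then - h i else undefined) \<noteq> 0} = {i\<in>{..<n}. h i \<noteq> 0}" by auto
  thus ?thesis using h by (auto simp: Hset_def PiE_def Pi_def extensional_def)
qed

lemma mlf_neg0:
  assumes "t \<ge> 1"
  shows "mlf_eval t n B (xs(0 := (\<lambda>i. - xs 0 i))) = - mlf_eval t n B xs"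
proof -
  obtain t' where t: "t = Suc t'" using assms by (cases t) auto
  show ?thesis
    unfolding mlf_eval_def t prod.lessThan_Suc_shift
    by (simp add: sum_negf[symmetric])
qed

lemma Max_nonneg:
  assumes "t \<ge> 1"
  shows "0 \<le> Max (mlf_eval t n B ` PiE {..<t} (\<lambda>j. Hset n (d j)))"
proof -
  let ?P = "PiE {..<t} (\<lambda>j. Hset n (d j))"
  have fin: "finite (mlf_eval t n B ` ?P)"
    by (intro finite_imageI finite_PiE finite_Hset) auto
  have "?P \<noteq> {}" using Hset_nonempty by (simp add: PiE_eq_empty_iff)
  then obtain hs where hs: "hs \<in> ?P" by blast
  let ?hs' = "hs(0 := (\<lambda>i. if i < n then - hs 0 i else undefined))"
  have "hs 0 \<in> Hset n (d 0)" using hs assms by (auto simp: PiE_def Pi_def)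
  hence "?hs' \<in> ?P" using hs assms Hset_neg[of "hs 0" n "d 0"] by (auto simp: PiE_def Pi_def extensional_def)
  hence "mlf_eval t n B ?hs' \<le> Max (mlf_eval t n B ` ?P)" using fin by auto
  moreover have "mlf_eval t n B ?hs' = mlf_eval t n B (hs(0 := (\<lambda>i. - hs 0 i)))"
    by (rule mlf_eval_cong) auto
  moreover have "mlf_eval t n B hs \<le> Max (mlf_eval t n B ` ?P)" using fin hs by auto
  ultimately show ?thesis using mlf_neg0[OF assms, of n B hs] by linarith
qed


lemma slot_decomp:
  assumes a: "a \<ge> 0" and yb: "\<forall>i<n. \<bar>y i\<bar> \<le> a" and cs: "card {i\<in>{..<n}. y i \<noteq> 0} \<le> D"
  shows "\<exists>(I::(nat\<Rightarrow>real) set) w \<phi>. finite I \<and> (\<forall>i<n. y i = (\<Sum>e\<in>I. w e * \<phi> e i)) \<and> (\<forall>e\<in>I. w e \<ge> 0)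
      \<and> (\<Sum>e\<in>I. w e) = a \<and> (\<forall>e\<in>I. \<phi> e \<in> Hset n D)"
proof -
  let ?S = "{i\<in>{..<n}. y i \<noteq> 0}"
  have "card ?S \<le> card {..<n}" by (intro card_mono) auto
  with cs have "card ?S \<le> min D n" by simp
  then obtain L where SL: "?S \<subseteq> L" and Ln: "L \<subseteq> {..<n}" and cL: "card L = min D n"
    using exists_subset_between[of ?S "min D n" "{..<n}"] by auto
  have finL: "finite L" using Ln finite_subset by blast
  define v where "v i = y i / a" for i
  have vb: "\<bar>v l\<bar> \<le> 1" if "l \<in> L" for l
  proof (cases "a = 0")
    case True thus ?thesis by (simp add: v_def)
  next
    case False
    hence "a > 0" using a by simp
    moreover have "\<bar>y l\<bar> \<le> a" using yb that Ln by auto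
    ultimately have "\<bar>y l\<bar> / a \<le> 1" by (simp add: divide_le_eq_1)
    thus ?thesis using a by (simp add: v_def abs_divide)
  qed
  have av: "a * v i = y i" if "i<n" for i
  proof (cases "a = 0")
    case True
    hence "y i = 0" using yb that by force
    thus ?thesis using True by simp
  qed (simp add: v_def)
  define I where "I = PiE L (\<lambda>_. {-1, 1::real})"
  define w where "w e = a * (\<Prod>l\<in>L. (1 + e l * v l) / 2)" for e :: "nat \<Rightarrow> real"
  define \<phi> where "\<phi> e = (\<lambda>i. if i < n then (if i \<in> L then e i else 0) else (undefined::real))" for e :: "nat \<Rightarrow> real"
  have finI: "finite I" unfolding I_def using finL by (intro finite_PiE) auto
  have fac_nn: "0 \<le> (1 + x * v l) / 2" if "x \<in> {-1,1}" "l \<in> L" for x l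
    using vb[OF that(2)] that(1) by (auto simp: abs_le_iff)
  have wnn: "\<forall>e\<in>I. w e \<ge> 0"
    unfolding w_def I_def using a fac_nn by (auto intro!: mult_nonneg_nonneg prod_nonneg simp: PiE_def Pi_def)
  have sumw: "(\<Sum>e\<in>I. w e) = a"
  proof -
    have "(\<Sum>e\<in>I. w e) = a * (\<Sum>e\<in>I. \<Prod>l\<in>L. (1 + e l * v l) / 2)"
      unfolding w_def by (simp add: sum_distrib_left)
    also have "(\<Sum>e\<in>I. \<Prod>l\<in>L. (1 + e l * v l) / 2) = (\<Prod>l\<in>L. \<Sum>x\<in>{-1,1::real}. (1 + x * v l) / 2)"
      unfolding I_def by (rule prod_sum_PiE[symmetric]) (use finL in auto)
    also have "\<dots> = 1" by (intro prod.neutral ballI) (simp add: add_divide_distrib[symmetric])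
    finally show ?thesis by simp
  qed
  have ex: "\<forall>i<n. y i = (\<Sum>e\<in>I. w e * \<phi> e i)"
  proof (intro allI impI)
    fix i assume i: "i < n"
    show "y i = (\<Sum>e\<in>I. w e * \<phi> e i)"
    proof (cases "i \<in> L")
      case False
      hence "y i = 0" using SL i by auto
      thus ?thesis using False i by (simp add: \<phi>_def)
    next
      case True
      define g where "g l x = (1 + x * v l) / 2 * (if l = i then x else 1)" for l and x :: real
      have "(\<Sum>e\<in>I. w e * \<phi> e i) = a * (\<Sum>e\<in>I. \<Prod>l\<in>L. g l (e l))"
      proof -
        have "w e * \<phi> e i = a * (\<Prod>l\<in>L. g l (e l))" for e
        proof -
          have "(\<Prod>l\<in>L. g l (e l)) = (\<Prod>l\<in>L. (1 + e l * v l) / 2) * (\<Prod>l\<in>L. (if l = i then e l else 1))"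
            unfolding g_def by (rule prod.distrib)
          also have "(\<Prod>l\<in>L. (if l = i then e l else 1)) = e i"
            using True finL by (simp add: prod.delta)
          finally show ?thesis using True i by (simp add: w_def \<phi>_def)
        qed
        thus ?thesis by (simp add: sum_distrib_left)
      qed
      also have "(\<Sum>e\<in>I. \<Prod>l\<in>L. g l (e l)) = (\<Prod>l\<in>L. \<Sum>x\<in>{-1,1::real}. g l x)"
        unfolding I_def by (rule prod_sum_PiE[symmetric]) (use finL in auto)
      also have "\<dots> = (\<Prod>l\<in>L. (if l = i then v l else 1))"
        by (intro prod.cong refl) (auto simp: g_def add_divide_distrib[symmetric] algebra_simps)
      also have "\<dots> = v i" using True finL by (simp add: prod.delta)
      finally show ?thesis using av[OF i] by simp
    qed
  qed
  have inH: "\<forall>e\<in>I. \<phi> e \<in> Hset n D"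
  proof
    fix e assume e: "e \<in> I"
    have "{i\<in>{..<n}. \<phi> e i \<noteq> 0} = L"
      using e Ln by (auto simp: \<phi>_def I_def PiE_def Pi_def)
    moreover have "\<phi> e \<in> PiE {..<n} (\<lambda>_. {-1, 0, 1})"
      using e Ln by (auto simp: \<phi>_def I_def PiE_def Pi_def extensional_def)
    ultimately show "\<phi> e \<in> Hset n D" using cL by (simp add: Hset_def)
  qed
  show ?thesis using finI ex wnn sumw inH by blast
qed



definition lev :: "nat \<Rightarrow> real \<Rightarrow> real \<Rightarrow> nat" where
  "lev R S q = (LEAST r. 1 \<le> r \<and> (r = R \<or> S < 2^r * q))"

lemma lev_props:
  assumes "R \<ge> 1"
  shows "1 \<le> lev R S q" "lev R S q \<le> R" "lev R S q < R \<Longrightarrow> S < 2^(lev R S q) * q"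
    "2^(lev R S q - 1) * q \<le> S \<or> lev R S q = 1"
proof -
  let ?P = "\<lambda>r. 1 \<le> r \<and> (r = R \<or> S < 2^r * q)"
  have PR: "?P R" using assms by simp
  have PL: "?P (lev R S q)" unfolding lev_def by (rule LeastI[of ?P, OF PR])
  thus "1 \<le> lev R S q" by simp
  show le: "lev R S q \<le> R" unfolding lev_def by (rule Least_le[of ?P, OF PR])
  show "lev R S q < R \<Longrightarrow> S < 2^(lev R S q) * q" using PL by auto
  show "2^(lev R S q - 1) * q \<le> S \<or> lev R S q = 1"
  proof (cases "lev R S q = 1")
    case False
    hence lt: "lev R S q - 1 < lev R S q" and ge: "1 \<le> lev R S q - 1" using PL by auto
    have "\<not> ?P (lev R S q - 1)" using not_less_Least[OF lt[unfolded lev_def]] unfolding lev_def .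
    moreover have "lev R S q - 1 \<noteq> R" using le lt by linarith
    ultimately show ?thesis using ge by auto
  qed simp
qed

lemma lp_norm_pos:
  assumes "p \<ge> 1" "\<exists>i<n. x i \<noteq> 0"
  shows "lp_norm n p x > 0"
proof -
  obtain i where i: "i < n" "x i \<noteq> 0" using assms by auto
  have "0 < \<bar>x i\<bar> powr p" using i by simp
  also have "\<dots> \<le> (\<Sum>l<n. \<bar>x l\<bar> powr p)"
    using i by (intro member_le_sum) auto
  finally show ?thesis unfolding lp_norm_def by simp
qed

lemma level_decomp:
  assumes p: "p \<ge> 1" and R: "R \<ge> 1" "n \<le> 2^R" and nz: "\<exists>i<n. x i \<noteq> 0"
  shows "\<exists>y. (\<forall>i<n. x i = (\<Sum>r\<in>{1..R}. y r i))
     \<and> (\<forall>r\<in>{1..R}. \<forall>i<n. \<bar>y r i\<bar> \<le> lp_norm n p x / 2 powr ((real r - 1) / p))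
     \<and> (\<forall>r\<in>{1..R}. card {i\<in>{..<n}. y r i \<noteq> 0} \<le> 2^r)"
proof -
  define S where "S = (\<Sum>l<n. \<bar>x l\<bar> powr p)"
  define q where "q i = \<bar>x i\<bar> powr p" for i
  define y where "y r i = (if lev R S (q i) = r then x i else 0)" for r i
  have N: "lp_norm n p x = S powr (1/p)" by (simp add: lp_norm_def S_def)
  have "S \<ge> 0" unfolding S_def by (intro sum_nonneg) auto
  moreover have "S \<noteq> 0" using lp_norm_pos[OF p nz] N by auto
  ultimately have Spos: "S > 0" by simp
  have qnn: "q i \<ge> 0" for i by (simp add: q_def)
  have qS: "q i \<le> S" if "i < n" for i
    unfolding S_def q_def using that by (intro member_le_sum) auto
  have A: "\<forall>i<n. x i = (\<Sum>r\<in>{1..R}. y r i)"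
  proof (intro allI impI)
    fix i assume "i < n"
    have "lev R S (q i) \<in> {1..R}" using lev_props[OF R(1)] by auto
    thus "x i = (\<Sum>r\<in>{1..R}. y r i)" unfolding y_def by (simp add: sum.delta')
  qed
  have B: "\<forall>r\<in>{1..R}. \<forall>i<n. \<bar>y r i\<bar> \<le> lp_norm n p x / 2 powr ((real r - 1) / p)"
  proof (intro ballI allI impI)
    fix r i assume r: "r \<in> {1..R}" and i: "i < n"
    show "\<bar>y r i\<bar> \<le> lp_norm n p x / 2 powr ((real r - 1) / p)"
    proof (cases "lev R S (q i) = r")
      case False thus ?thesis using Spos by (simp add: y_def N)
    next
      case True
      have "2^(r - 1) * q i \<le> S"
        using lev_props(4)[OF R(1), of S "q i"] True qS[OF i] by auto
      hence qb: "q i \<le> S / 2^(r-1)" by (simp add: field_simps)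
      have "\<bar>x i\<bar> = q i powr (1/p)" using p by (simp add: q_def powr_powr)
      also have "\<dots> \<le> (S / 2^(r-1)) powr (1/p)"
        using qb qnn p by (intro powr_mono2) auto
      also have "\<dots> = S powr (1/p) / (2^(r-1)) powr (1/p)"
        using Spos by (simp add: powr_divide)
      also have "(2::real)^(r-1) = 2 powr (real r - 1)"
        using r by (simp add: powr_realpow[symmetric] of_nat_diff)
      also have "(2 powr (real r - 1)) powr (1/p) = 2 powr ((real r - 1)/p)"
        by (simp add: powr_powr)
      finally show ?thesis using True by (simp add: y_def N)
    qed
  qed
  have C: "\<forall>r\<in>{1..R}. card {i\<in>{..<n}. y r i \<noteq> 0} \<le> 2^r"
  proof
    fix r assume r: "r \<in> {1..R}"
    let ?L = "{i\<in>{..<n}. lev R S (q i) = r}"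
    have sub: "{i\<in>{..<n}. y r i \<noteq> 0} \<subseteq> ?L" by (auto simp: y_def split: if_splits)
    have cL: "card ?L \<le> 2^r"
    proof (cases "r = R")
      case True
      have "card ?L \<le> card {..<n}" by (intro card_mono) auto
      thus ?thesis using True R(2) by simp
    next
      case False
      hence rR: "r < R" using r by auto
      show ?thesis
      proof (cases "?L = {}")
        case True
        hence "card ?L = 0" by (simp only: card.empty)
        thus ?thesis by linarith
      next
        case False
        have "(\<Sum>i\<in>?L. S) < (\<Sum>i\<in>?L. 2^r * q i)"
          using False lev_props(3)[OF R(1)] rR by (intro sum_strict_mono) auto
        also have "\<dots> = 2^r * (\<Sum>i\<in>?L. q i)" by (simp add: sum_distrib_left)
        also have "(\<Sum>i\<in>?L. q i) \<le> (\<Sum>i\<in>{..<n}. q i)"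
          using qnn by (intro sum_mono2) auto
        finally have "real (card ?L) * S < 2^r * S" by (simp add: S_def q_def)
        hence "real (card ?L) < 2^r" using Spos by simp
        hence "card ?L < 2^r" by (metis of_nat_less_numeral_power_cancel_iff)
        thus ?thesis by simp
      qed
    qed
    have "card {i\<in>{..<n}. y r i \<noteq> 0} \<le> card ?L" by (intro card_mono sub) auto
    thus "card {i\<in>{..<n}. y r i \<noteq> 0} \<le> 2^r" using cL by simp
  qed
  show ?thesis using A B C by blast
qed



lemma prod_a_bound:
  assumes p: "p \<ge> 1" and Npos: "\<forall>j<t. N j > 0"
  shows "(\<Prod>j<t. N j / 2 powr ((real (rs j) - 1) / p))
      \<le> 2^t * (\<Prod>j<t. N j) / 2 powr (real (\<Sum>j<t. rs j) / p)"
proof -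
  have "(\<Prod>j<t. N j / 2 powr ((real (rs j) - 1) / p)) = (\<Prod>j<t. N j) / (\<Prod>j<t. 2 powr ((real (rs j) - 1) / p))"
    by (rule prod_dividef)
  also have "(\<Prod>j<t. 2 powr ((real (rs j) - 1) / p)) = 2 powr (\<Sum>j<t. (real (rs j) - 1) / p)"
    by (simp add: powr_sum)
  also have "(\<Sum>j<t. (real (rs j) - 1) / p) = real (\<Sum>j<t. rs j) / p - real t / p"
    by (simp add: sum_divide_distrib[symmetric] sum_subtractf diff_divide_distrib)
  also have "2 powr (real (\<Sum>j<t. rs j) / p - real t / p) = 2 powr (real (\<Sum>j<t. rs j) / p) / 2 powr (real t / p)"
    by (rule powr_diff)
  also have "(\<Prod>j<t. N j) / (2 powr (real (\<Sum>j<t. rs j) / p) / 2 powr (real t / p))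
     = 2 powr (real t / p) * (\<Prod>j<t. N j) / 2 powr (real (\<Sum>j<t. rs j) / p)"
    by simp
  also have "\<dots> \<le> 2^t * (\<Prod>j<t. N j) / 2 powr (real (\<Sum>j<t. rs j) / p)"
  proof -
    have "2 powr (real t / p) \<le> 2 powr (real t)"
      using p mult_left_mono[OF p, of "real t"] by (intro powr_mono) (auto simp: divide_le_eq)
    also have "\<dots> = 2^t" by (simp add: powr_realpow)
    finally have "2 powr (real t / p) \<le> 2^t" .
    moreover have "(\<Prod>j<t. N j) \<ge> 0" using Npos by (intro prod_nonneg) auto
    ultimately show ?thesis by (intro divide_right_mono mult_right_mono) auto
  qed
  finally show ?thesis .
qed

definition slotok :: "nat \<Rightarrow> (nat \<Rightarrow> real) \<Rightarrow> real \<Rightarrow> nat \<Rightarrow> (nat \<Rightarrow> real) set \<Rightarrow> ((nat \<Rightarrow> real) \<Rightarrow> real) \<Rightarrow> ((nat \<Rightarrow> real) \<Rightarrow> nat \<Rightarrow> real) \<Rightarrow> bool" where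
  "slotok n y a D I w \<phi> \<longleftrightarrow> finite I \<and> (\<forall>i<n. y i = (\<Sum>e\<in>I. w e * \<phi> e i)) \<and> (\<forall>e\<in>I. w e \<ge> 0)
      \<and> (\<Sum>e\<in>I. w e) = a \<and> (\<forall>e\<in>I. \<phi> e \<in> Hset n D)"

lemma det_bound:
  fixes B :: "(nat \<Rightarrow> nat) \<Rightarrow> real" and xs :: "nat \<Rightarrow> nat \<Rightarrow> real"
  assumes t: "t \<ge> 1" and p: "p \<ge> 1" and R: "R \<ge> 1" "n \<le> 2^R" and nz: "\<forall>j<t. \<exists>i<n. xs j i \<noteq> 0"
  shows "mlf_eval t n B xs / (\<Prod>j<t. lp_norm n p (xs j)) \<le> 2 ^ t * (\<Sum>r\<in>PiE {..<t} (\<lambda>_. {1..R}).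
          Max (mlf_eval t n B ` PiE {..<t} (\<lambda>j. Hset n (2 ^ r j))) / 2 powr (real (\<Sum>j<t. r j) / p))"
proof -
  define N where "N j = lp_norm n p (xs j)" for j
  have Npos: "\<forall>j<t. N j > 0" using nz lp_norm_pos[OF p] by (auto simp: N_def)
  have PNpos: "(\<Prod>j<t. N j) > 0" using Npos by (intro prod_pos) auto
  define M where "M rs = Max (mlf_eval t n B ` PiE {..<t} (\<lambda>j. Hset n (2 ^ rs j)))" for rs :: "nat \<Rightarrow> nat"
  define c where "c rs = 2 powr (real (\<Sum>j<t. rs j) / p)" for rs :: "nat \<Rightarrow> nat"
  have Mnn: "M rs \<ge> 0" for rs unfolding M_def by (rule Max_nonneg[OF t])
  have "\<forall>j. \<exists>y. j < t \<longrightarrow> ((\<forall>i<n. xs j i = (\<Sum>r\<in>{1..R}. y r i))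
     \<and> (\<forall>r\<in>{1..R}. \<forall>i<n. \<bar>y r i\<bar> \<le> N j / 2 powr ((real r - 1) / p))
     \<and> (\<forall>r\<in>{1..R}. card {i\<in>{..<n}. y r i \<noteq> 0} \<le> 2^r))"
    using level_decomp[OF p R] nz unfolding N_def by blast
  from choice[OF this] obtain Y where Y0: "\<forall>j. j < t \<longrightarrow> ((\<forall>i<n. xs j i = (\<Sum>r\<in>{1..R}. Y j r i))
     \<and> (\<forall>r\<in>{1..R}. \<forall>i<n. \<bar>Y j r i\<bar> \<le> N j / 2 powr ((real r - 1) / p))
     \<and> (\<forall>r\<in>{1..R}. card {i\<in>{..<n}. Y j r i \<noteq> 0} \<le> 2^r))"
    by (elim exE) (rule that)
  note Y = Y0[rule_format]
  have "mlf_eval t n B xs = (\<Sum>rs\<in>PiE {..<t} (\<lambda>_. {1..R}). (\<Prod>j<t. (\<lambda>_ _. 1::real) j (rs j)) * mlf_eval t n B (\<lambda>j. Y j (rs j)))"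
    by (rule mlf_expand) (use Y in auto)
  also have "\<dots> \<le> (\<Sum>rs\<in>PiE {..<t} (\<lambda>_. {1..R}). 2^t * (\<Prod>j<t. N j) / c rs * M rs)"
  proof (rule sum_mono)
    fix rs assume rs: "rs \<in> PiE {..<t} (\<lambda>_. {1..R})"
    have rsj: "rs j \<in> {1..R}" if "j < t" for j using rs that by (auto simp: PiE_def Pi_def)
    define aa where "aa j = N j / 2 powr ((real (rs j) - 1) / p)" for j
    have ex3: "\<forall>j. \<exists>I w \<phi>. j < t \<longrightarrow> slotok n (Y j (rs j)) (aa j) (2 ^ rs j) I w \<phi>"
    proof (intro allI)
      fix j
      show "\<exists>I w \<phi>. j < t \<longrightarrow> slotok n (Y j (rs j)) (aa j) (2 ^ rs j) I w \<phi>"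
      proof (cases "j < t")
        case True
        have "aa j \<ge> 0" unfolding aa_def using Npos True by (intro divide_nonneg_nonneg) (auto simp: less_imp_le)
        from slot_decomp[OF this, of n "Y j (rs j)" "2 ^ rs j"]
        obtain I w \<phi> where "slotok n (Y j (rs j)) (aa j) (2 ^ rs j) I w \<phi>"
          using Y[OF True] rsj[OF True] unfolding slotok_def aa_def by blast
        thus ?thesis by blast
      qed simp
    qed
    from choice[OF ex3] obtain II where h1: "\<forall>j. \<exists>w \<phi>. j < t \<longrightarrow> slotok n (Y j (rs j)) (aa j) (2 ^ rs j) (II j) w \<phi>"
      by (elim exE) (rule that)
    from choice[OF h1] obtain WW where h2: "\<forall>j. \<exists>\<phi>. j < t \<longrightarrow> slotok n (Y j (rs j)) (aa j) (2 ^ rs j) (II j) (WW j) \<phi>"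
      by (elim exE) (rule that)
    from choice[OF h2] obtain PH where h3: "\<forall>j. j < t \<longrightarrow> slotok n (Y j (rs j)) (aa j) (2 ^ rs j) (II j) (WW j) (PH j)"
      by (elim exE) (rule that)
    have D: "finite (II j::(nat\<Rightarrow>real) set) \<and> (\<forall>i<n. Y j (rs j) i = (\<Sum>e\<in>II j. WW j e * PH j e i)) \<and> (\<forall>e\<in>II j. WW j e \<ge> 0)
      \<and> (\<Sum>e\<in>II j. WW j e) = N j / 2 powr ((real (rs j) - 1) / p) \<and> (\<forall>e\<in>II j. PH j e \<in> Hset n (2 ^ rs j))" if "j < t" for j
      using h3 that unfolding slotok_def aa_def by simp
    have "mlf_eval t n B (\<lambda>j. Y j (rs j)) \<le> (\<Prod>j<t. \<Sum>e\<in>II j. WW j e) * M rs"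
      unfolding M_def by (rule mlf_convex_bound) (use D finite_Hset in auto)
    also have "(\<Prod>j<t. \<Sum>e\<in>II j. WW j e) = (\<Prod>j<t. N j / 2 powr ((real (rs j) - 1) / p))"
      using D by (intro prod.cong) auto
    also have "\<dots> * M rs \<le> 2^t * (\<Prod>j<t. N j) / c rs * M rs"
      unfolding c_def using prod_a_bound[OF p Npos] Mnn by (intro mult_right_mono) auto
    finally show "(\<Prod>j<t. (\<lambda>_ _. 1::real) j (rs j)) * mlf_eval t n B (\<lambda>j. Y j (rs j)) \<le> 2^t * (\<Prod>j<t. N j) / c rs * M rs"
      by simp
  qed
  also have "\<dots> = (\<Prod>j<t. N j) * (2 ^ t * (\<Sum>rs\<in>PiE {..<t} (\<lambda>_. {1..R}). M rs / c rs))"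
    by (simp add: sum_distrib_left mult_ac)
  finally have "mlf_eval t n B xs \<le> (\<Prod>j<t. N j) * (2 ^ t * (\<Sum>rs\<in>PiE {..<t} (\<lambda>_. {1..R}). M rs / c rs))" .
  hence "mlf_eval t n B xs / (\<Prod>j<t. N j) \<le> 2 ^ t * (\<Sum>rs\<in>PiE {..<t} (\<lambda>_. {1..R}). M rs / c rs)"
    using PNpos by (simp add: divide_le_eq mult_ac)
  thus ?thesis by (simp add: N_def M_def c_def)
qed



lemma norm_bound:
  fixes B :: "(nat \<Rightarrow> nat) \<Rightarrow> real"
  assumes t: "t \<ge> 1" and p: "p \<ge> 1" and R: "R \<ge> 1" "n \<le> 2^R" and n: "n \<ge> 1"
  shows "mlf_norm t n p B \<le> 2 ^ t * (\<Sum>r\<in>PiE {..<t} (\<lambda>_. {1..R}).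
          Max (mlf_eval t n B ` PiE {..<t} (\<lambda>j. Hset n (2 ^ r j))) / 2 powr (real (\<Sum>j<t. r j) / p))"
  unfolding mlf_norm_def
proof (rule cSup_least)
  let ?x0 = "restrict (\<lambda>j. restrict (\<lambda>i. 1::real) {..<n}) {..<t}"
  have "?x0 \<in> PiE {..<t} (\<lambda>_. {v \<in> extensional {..<n}. (\<exists>i<n. v i \<noteq> 0)})"
    using n by (auto intro!: exI[of _ 0])
  thus "{mlf_eval t n B xs / (\<Prod>j<t. lp_norm n p (xs j)) |xs.
      xs \<in> PiE {..<t} (\<lambda>_. {v \<in> extensional {..<n}. \<exists>i<n. v i \<noteq> 0})} \<noteq> {}" by blast
next
  fix x assume "x \<in> {mlf_eval t n B xs / (\<Prod>j<t. lp_norm n p (xs j)) |xs.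
      xs \<in> PiE {..<t} (\<lambda>_. {v \<in> extensional {..<n}. \<exists>i<n. v i \<noteq> 0})}"
  then obtain xs where x: "x = mlf_eval t n B xs / (\<Prod>j<t. lp_norm n p (xs j))"
    and xs: "xs \<in> PiE {..<t} (\<lambda>_. {v \<in> extensional {..<n}. \<exists>i<n. v i \<noteq> 0})" by blast
  have "\<forall>j<t. \<exists>i<n. xs j i \<noteq> 0" using xs by (auto simp: PiE_def Pi_def)
  thus "x \<le> 2 ^ t * (\<Sum>r\<in>PiE {..<t} (\<lambda>_. {1..R}).
          Max (mlf_eval t n B ` PiE {..<t} (\<lambda>j. Hset n (2 ^ r j))) / 2 powr (real (\<Sum>j<t. r j) / p))"
    unfolding x by (rule det_bound[OF t p R])
qed

lemma finite_rademacher: "finite (set_pmf (rademacher k))"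
  unfolding rademacher_def
  by (subst set_Pi_pmf) (auto intro!: finite_PiE_dflt)

theorem lemma4p4:
  fixes t n k :: nat and p :: real and A :: "nat \<Rightarrow> (nat \<Rightarrow> nat) \<Rightarrow> real"
  assumes "t \<ge> 3" and "n \<ge> 2" and "\<forall>i<k. Pi_class t n (A i)" and "p \<ge> 1"
  defines "R \<equiv> nat \<lceil>log 2 (real n)\<rceil>"
  shows "measure_pmf.expectation (rademacher k) (\<lambda>\<epsilon>. mlf_norm t n p (rsum k A \<epsilon>))
     \<le> 2 ^ t * (\<Sum>r\<in>PiE {..<t} (\<lambda>_. {1..R}).
          measure_pmf.expectation (rademacher k)
            (\<lambda>\<epsilon>. Max (mlf_eval t n (rsum k A \<epsilon>) ` PiE {..<t} (\<lambda>j. Hset n (2 ^ r j))))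
          / 2 powr (real (\<Sum>j<t. r j) / p))"
proof -
  have t: "t \<ge> 1" using assms(1) by simp
  have lg: "log 2 (real n) \<ge> 1" using assms(2) by simp
  hence R1: "R \<ge> 1" unfolding R_def by linarith
  have "0 \<le> \<lceil>log 2 (real n)\<rceil>" using lg le_of_int_ceiling[of "log 2 (real n)"] by linarith
  hence "real R = real_of_int \<lceil>log 2 (real n)\<rceil>" unfolding R_def by (rule of_nat_nat)
  hence lgR: "log 2 (real n) \<le> real R" by (simp add: le_of_int_ceiling)
  have "real n = 2 powr (log 2 (real n))" using assms(2) by simp
  also have "\<dots> \<le> 2 powr (real R)"
    using lgR by (intro powr_mono) auto
  also have "\<dots> = 2 ^ R" by (simp add: powr_realpow)
  finally have nR: "n \<le> 2 ^ R" by (metis of_nat_le_iff of_nat_numeral of_nat_power)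
  have n1: "n \<ge> 1" using assms(2) by simp
  let ?M = "\<lambda>r \<epsilon>. Max (mlf_eval t n (rsum k A \<epsilon>) ` PiE {..<t} (\<lambda>j. Hset n (2 ^ r j)))"
  let ?c = "\<lambda>r::nat\<Rightarrow>nat. 2 powr (real (\<Sum>j<t. r j) / p)"
  have int: "integrable (measure_pmf (rademacher k)) f" for f :: "(nat \<Rightarrow> real) \<Rightarrow> real"
    by (rule integrable_measure_pmf_finite[OF finite_rademacher])
  have "measure_pmf.expectation (rademacher k) (\<lambda>\<epsilon>. mlf_norm t n p (rsum k A \<epsilon>))
     \<le> measure_pmf.expectation (rademacher k) (\<lambda>\<epsilon>. 2 ^ t * (\<Sum>r\<in>PiE {..<t} (\<lambda>_. {1..R}). ?M r \<epsilon> / ?c r))"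
    by (intro integral_mono int norm_bound[OF t assms(4) R1 nR n1])
  also have "\<dots> = 2 ^ t * (\<Sum>r\<in>PiE {..<t} (\<lambda>_. {1..R}). measure_pmf.expectation (rademacher k) (?M r) / ?c r)"
    by (simp add: int)
  finally show ?thesis .
qed

end
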